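(* For $D\in\mathbb N$ let $\Pi_D$ be the law of $f=D^{-1/2}\sum_{j=1}^DZ_j\varphi_j$ and let $\mathbb H_D$ be its RKHS. Then for any $\epsilon>0$, any $f_0\in\mathcal S^\beta(L)$ and any $D\ge(L/\epsilon)^{d/\beta}$, \[\inf_{h\in\mathbb H_D:\|h-f_0\|\le\epsilon}\|h\|_{\mathbb H_D}^2\le D\|f_0\|^2.\]
   Context: $G$ is a probability distribution on $\mathcal X\subseteq\mathbb R^d$, $\|\cdot\|$ the norm of $L^2(\mathcal X,G)$, $(\varphi_j)_{j\in\mathbb N}$ an orthonormal basis of $L^2(\mathcal X,G)$, $Z_j$ i.i.d. $\mathcal N(0,1)$, $\beta>0$, $L>0$. $\mathcal S^\beta(L)=\{g\in L^2(\mathcal X,G):\sum_j j^{2\beta/d}\langle g,\varphi_j\rangle^2\le L^2\}$. The RKHS $\mathbb H_D$ is the span of $\varphi_1,\dots,\varphi_D$ with norm $\|h\|_{\mathbb H_D}^2=D\sum_{j=1}^D\langle h,\varphi_j\rangle^2$. *)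

theory Defs
  imports "HOL-Probability.Probability"
begin

definition L2 :: "'x measure \<Rightarrow> ('x \<Rightarrow> real) set" where
  "L2 G = {f. f \<in> borel_measurable G \<and> integrable G (\<lambda>x. (f x)\<^sup>2)}"

definition l2inner :: "'x measure \<Rightarrow> ('x \<Rightarrow> real) \<Rightarrow> ('x \<Rightarrow> real) \<Rightarrow> real" where
  "l2inner G f g = (\<integral>x. f x * g x \<partial>G)"

definition l2norm :: "'x measure \<Rightarrow> ('x \<Rightarrow> real) \<Rightarrow> real" where
  "l2norm G f = sqrt (\<integral>x. (f x)\<^sup>2 \<partial>G)"

definition orthonormal_basis_L2 :: "'x measure \<Rightarrow> (nat \<Rightarrow> 'x \<Rightarrow> real) \<Rightarrow> bool" where
  "orthonormal_basis_L2 G \<phi> \<longleftrightarrow>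
     (\<forall>j\<ge>1. \<phi> j \<in> L2 G) \<and>
     (\<forall>i\<ge>1. \<forall>j\<ge>1. l2inner G (\<phi> i) (\<phi> j) = (if i = j then 1 else 0)) \<and>
     (\<forall>g \<in> L2 G. (\<lambda>n. l2norm G (\<lambda>x. g x - (\<Sum>j=1..n. l2inner G g (\<phi> j) * \<phi> j x)))
                    \<longlonglongrightarrow> 0)"

definition sobolev_class ::
  "'x measure \<Rightarrow> (nat \<Rightarrow> 'x \<Rightarrow> real) \<Rightarrow> nat \<Rightarrow> real \<Rightarrow> real \<Rightarrow> ('x \<Rightarrow> real) set" where
  "sobolev_class G \<phi> d \<beta> L =
     {g \<in> L2 G. summable (\<lambda>j. real (Suc j) powr (2 * \<beta> / d) * (l2inner G g (\<phi> (Suc j)))\<^sup>2)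
               \<and> (\<Sum>j. real (Suc j) powr (2 * \<beta> / d) * (l2inner G g (\<phi> (Suc j)))\<^sup>2) \<le> L\<^sup>2}"

definition RKHS_D :: "(nat \<Rightarrow> 'x \<Rightarrow> real) \<Rightarrow> nat \<Rightarrow> ('x \<Rightarrow> real) set" where
  "RKHS_D \<phi> D = {h. \<exists>c. h = (\<lambda>x. \<Sum>j=1..D. c j * \<phi> j x)}"

definition RKHS_D_norm_sq :: "'x measure \<Rightarrow> (nat \<Rightarrow> 'x \<Rightarrow> real) \<Rightarrow> nat \<Rightarrow> ('x \<Rightarrow> real) \<Rightarrow> real" where
  "RKHS_D_norm_sq G \<phi> D h = real D * (\<Sum>j=1..D. (l2inner G h (\<phi> j))\<^sup>2)"

end

theory Submission
  imports Defs
begin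

lemma L2_prod_integrable:
  fixes f g :: "'x \<Rightarrow> real"
  assumes "f \<in> L2 G" "g \<in> L2 G"
  shows "integrable G (\<lambda>x. f x * g x)"
proof (rule Bochner_Integration.integrable_bound[where f="\<lambda>x. (f x)\<^sup>2 + (g x)\<^sup>2"])
  show "integrable G (\<lambda>x. (f x)\<^sup>2 + (g x)\<^sup>2)" using assms by (auto simp: L2_def)
  show "(\<lambda>x. f x * g x) \<in> borel_measurable G" using assms by (auto simp: L2_def)
  show "AE x in G. norm (f x * g x) \<le> norm ((f x)\<^sup>2 + (g x)\<^sup>2)"
  proof (rule AE_I2)
    fix x
    have "\<bar>f x * g x\<bar> \<le> (f x)\<^sup>2 + (g x)\<^sup>2"
    proof -
      have "0 \<le> (\<bar>f x\<bar> - \<bar>g x\<bar>)\<^sup>2" by simp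
      then have "2 * (\<bar>f x\<bar> * \<bar>g x\<bar>) \<le> (f x)\<^sup>2 + (g x)\<^sup>2"
        by (simp add: power2_diff)
      moreover have "0 \<le> \<bar>f x\<bar> * \<bar>g x\<bar>" by simp
      ultimately show ?thesis unfolding abs_mult by linarith
    qed
    then show "norm (f x * g x) \<le> norm ((f x)\<^sup>2 + (g x)\<^sup>2)" by simp
  qed
qed

lemma expand_sq:
  fixes f :: "'x \<Rightarrow> real" and \<phi> :: "nat \<Rightarrow> 'x \<Rightarrow> real"
  assumes onb: "orthonormal_basis_L2 G \<phi>" and f: "f \<in> L2 G"
  shows "(\<integral>x. (f x - (\<Sum>j=1..n. l2inner G f (\<phi> j) * \<phi> j x))\<^sup>2 \<partial>G)
         = (\<integral>x. (f x)\<^sup>2 \<partial>G) - (\<Sum>j=1..n. (l2inner G f (\<phi> j))\<^sup>2)"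
proof -
  define a where "a j = l2inner G f (\<phi> j)" for j
  define A where "A = {1..n}"
  have phi: "\<And>j. j \<in> A \<Longrightarrow> \<phi> j \<in> L2 G" using onb by (auto simp: orthonormal_basis_L2_def A_def)
  have orth: "\<And>i j. i \<in> A \<Longrightarrow> j \<in> A \<Longrightarrow> (\<integral>x. \<phi> i x * \<phi> j x \<partial>G) = (if i = j then 1 else 0)"
    using onb by (auto simp: orthonormal_basis_L2_def A_def l2inner_def)
  have ff: "integrable G (\<lambda>x. (f x)\<^sup>2)" using f by (auto simp: L2_def)
  have fp: "\<And>j. j \<in> A \<Longrightarrow> integrable G (\<lambda>x. f x * \<phi> j x)" using phi f L2_prod_integrable by blast
  have pp: "\<And>i j. i \<in> A \<Longrightarrow> j \<in> A \<Longrightarrow> integrable G (\<lambda>x. \<phi> i x * \<phi> j x)" using phi L2_prod_integrable by blast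
  have pt: "\<And>x. (f x - (\<Sum>j\<in>A. a j * \<phi> j x))\<^sup>2 = (f x)\<^sup>2 - 2 * (\<Sum>j\<in>A. a j * (f x * \<phi> j x))
      + (\<Sum>i\<in>A. \<Sum>j\<in>A. a i * a j * (\<phi> i x * \<phi> j x))"
    by (simp add: power2_diff power2_eq_square sum_product sum_distrib_left algebra_simps)
  have "(\<integral>x. (f x - (\<Sum>j\<in>A. a j * \<phi> j x))\<^sup>2 \<partial>G)
      = (\<integral>x. (f x)\<^sup>2 \<partial>G) - 2 * (\<Sum>j\<in>A. a j * (\<integral>x. f x * \<phi> j x \<partial>G))
      + (\<Sum>i\<in>A. \<Sum>j\<in>A. a i * a j * (\<integral>x. \<phi> i x * \<phi> j x \<partial>G))"
    unfolding pt using ff fp pp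
    by (simp add: integral_sum integrable_sum)
  also have "\<dots> = (\<integral>x. (f x)\<^sup>2 \<partial>G) - 2 * (\<Sum>j\<in>A. (a j)\<^sup>2) + (\<Sum>i\<in>A. (a i)\<^sup>2)"
  proof -
    have "(\<Sum>i\<in>A. \<Sum>j\<in>A. a i * a j * (\<integral>x. \<phi> i x * \<phi> j x \<partial>G)) = (\<Sum>i\<in>A. \<Sum>j\<in>A. (if j = i then a i * a j else 0))"
      by (intro sum.cong refl) (simp add: orth)
    also have "\<dots> = (\<Sum>i\<in>A. (a i)\<^sup>2)" by (simp add: A_def power2_eq_square)
    finally show ?thesis by (simp add: a_def l2inner_def power2_eq_square)
  qed
  finally show ?thesis by (simp add: a_def A_def)
qed

lemma inner_partial:
  fixes f :: "'x \<Rightarrow> real" and \<phi> :: "nat \<Rightarrow> 'x \<Rightarrow> real"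
  assumes onb: "orthonormal_basis_L2 G \<phi>" and j: "j \<in> {1..D}"
  shows "l2inner G (\<lambda>x. \<Sum>i=1..D. c i * \<phi> i x) (\<phi> j) = c j"
proof -
  have phi: "\<And>j. j \<in> {1..D} \<Longrightarrow> \<phi> j \<in> L2 G" using onb by (auto simp: orthonormal_basis_L2_def)
  have orth: "\<And>i. i \<in> {1..D} \<Longrightarrow> (\<integral>x. \<phi> i x * \<phi> j x \<partial>G) = (if i = j then 1 else 0)"
    using onb j by (auto simp: orthonormal_basis_L2_def l2inner_def)
  have pp: "\<And>i. i \<in> {1..D} \<Longrightarrow> integrable G (\<lambda>x. \<phi> i x * \<phi> j x)" using phi j L2_prod_integrable by blast
  have "l2inner G (\<lambda>x. \<Sum>i=1..D. c i * \<phi> i x) (\<phi> j) = (\<integral>x. (\<Sum>i=1..D. c i * (\<phi> i x * \<phi> j x)) \<partial>G)"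
    unfolding l2inner_def by (intro arg_cong[where f="integral\<^sup>L G"] ext) (simp add: sum_distrib_right mult.assoc)
  also have "\<dots> = (\<Sum>i=1..D. c i * (\<integral>x. \<phi> i x * \<phi> j x \<partial>G))"
    using pp by (simp add: integral_sum)
  also have "\<dots> = (\<Sum>i=1..D. (if i = j then c i else 0))"
    by (intro sum.cong refl) (simp add: orth)
  also have "\<dots> = c j" using j by simp
  finally show ?thesis .
qed

theorem lemma11:
  fixes G :: "(real^'d) measure" and \<phi> :: "nat \<Rightarrow> real^'d \<Rightarrow> real"
    and \<beta> L \<epsilon> :: real and D :: nat and f\<^sub>0 :: "real^'d \<Rightarrow> real"
  assumes "prob_space G"
    and "orthonormal_basis_L2 G \<phi>"
    and "\<beta> > 0" and "L > 0" and "\<epsilon> > 0"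
    and "f\<^sub>0 \<in> sobolev_class G \<phi> CARD('d) \<beta> L"
    and "real D \<ge> (L / \<epsilon>) powr (real CARD('d) / \<beta>)"
  shows "Inf {RKHS_D_norm_sq G \<phi> D h | h. h \<in> RKHS_D \<phi> D \<and> l2norm G (\<lambda>x. h x - f\<^sub>0 x) \<le> \<epsilon>}
           \<le> real D * (l2norm G f\<^sub>0)\<^sup>2"
proof -
  note onb = assms(2)
  define d where "d = real CARD('d)"
  have dpos: "d > 0" by (simp add: d_def)
  define p where "p = 2 * \<beta> / d"
  have ppos: "p > 0" using dpos assms(3) by (simp add: p_def)
  have f0: "f\<^sub>0 \<in> L2 G" using assms(6) by (simp add: sobolev_class_def)
  define a where "a j = l2inner G f\<^sub>0 (\<phi> j)" for j
  define w where "w j = real (Suc j) powr p * (a (Suc j))\<^sup>2" for j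
  have wdef: "w = (\<lambda>j. real (Suc j) powr (2 * \<beta> / real CARD('d)) * (l2inner G f\<^sub>0 (\<phi> (Suc j)))\<^sup>2)"
    by (simp add: fun_eq_iff w_def a_def p_def d_def)
  have wsum: "summable w" and wle: "suminf w \<le> L\<^sup>2"
    using assms(6) unfolding wdef sobolev_class_def by auto
  have wnn: "\<And>j. 0 \<le> w j" by (simp add: w_def)
  define I where "I = (\<integral>x. (f\<^sub>0 x)\<^sup>2 \<partial>G)"
  have Inn: "0 \<le> I" unfolding I_def by (rule integral_nonneg_AE) simp
  define S where "S n = (\<Sum>j=1..n. (a j)\<^sup>2)" for n
  have E: "\<And>n. (\<integral>x. (f\<^sub>0 x - (\<Sum>j=1..n. a j * \<phi> j x))\<^sup>2 \<partial>G) = I - S n"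
    using expand_sq[OF onb f0] by (simp add: a_def I_def S_def)
  have Enn: "\<And>n. 0 \<le> I - S n"
  proof -
    fix n
    have "0 \<le> (\<integral>x. (f\<^sub>0 x - (\<Sum>j=1..n. a j * \<phi> j x))\<^sup>2 \<partial>G)"
      by (rule integral_nonneg_AE) simp
    then show "0 \<le> I - S n" using E[of n] by linarith
  qed
  have Dpos: "real D > 0"
    using assms(7) assms(4) assms(5) by (smt (verit) divide_pos_pos powr_gt_zero)
  have "(\<lambda>n. l2norm G (\<lambda>x. f\<^sub>0 x - (\<Sum>j=1..n. l2inner G f\<^sub>0 (\<phi> j) * \<phi> j x))) \<longlonglongrightarrow> 0"
    using onb f0 by (simp add: orthonormal_basis_L2_def)
  moreover have E': "\<And>n. (\<integral>x. (f\<^sub>0 x - (\<Sum>j=1..n. l2inner G f\<^sub>0 (\<phi> j) * \<phi> j x))\<^sup>2 \<partial>G) = I - S n"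
    using E unfolding a_def .
  ultimately have "(\<lambda>n. sqrt (I - S n)) \<longlonglongrightarrow> 0"
    unfolding l2norm_def E' by blast
  then have "(\<lambda>n. (sqrt (I - S n))\<^sup>2) \<longlonglongrightarrow> 0\<^sup>2" by (intro tendsto_power)
  moreover have "(\<lambda>n. (sqrt (I - S n))\<^sup>2) = (\<lambda>n. I - S n)"
    using Enn by (simp add: fun_eq_iff)
  ultimately have "(\<lambda>n. I - S n) \<longlonglongrightarrow> 0" by simp
  then have "(\<lambda>n. I - (I - S n)) \<longlonglongrightarrow> I - 0" by (intro tendsto_diff tendsto_const)
  then have Slim: "S \<longlonglongrightarrow> I" by simp
  have tail: "\<And>n. n \<ge> D \<Longrightarrow> real D powr p * (S n - S D) \<le> L\<^sup>2"
  proof -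
    fix n assume nD: "n \<ge> D"
    have split: "{1..n} = {1..D} \<union> {Suc D..n}" using nD by auto
    have "S n = S D + (\<Sum>j=Suc D..n. (a j)\<^sup>2)"
      unfolding S_def split by (subst sum.union_disjoint) auto
    then have "real D powr p * (S n - S D) = (\<Sum>j=Suc D..n. real D powr p * (a j)\<^sup>2)"
      by (simp add: sum_distrib_left)
    also have "\<dots> \<le> (\<Sum>j=Suc D..n. real j powr p * (a j)\<^sup>2)"
    proof (intro sum_mono mult_right_mono)
      fix j assume "j \<in> {Suc D..n}"
      then show "real D powr p \<le> real j powr p"
        using ppos by (intro powr_mono2) auto
    qed simp
    also have "\<dots> \<le> (\<Sum>j=1..n. real j powr p * (a j)\<^sup>2)"
      by (intro sum_mono2) auto
    also have "\<dots> = (\<Sum>j<n. w j)"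
      by (simp add: sum.atLeast1_atMost_eq w_def)
    also have "\<dots> \<le> suminf w" using wsum wnn by (intro sum_le_suminf) auto
    also have "\<dots> \<le> L\<^sup>2" by (rule wle)
    finally show "real D powr p * (S n - S D) \<le> L\<^sup>2" .
  qed
  have "(\<lambda>n. real D powr p * (S n - S D)) \<longlonglongrightarrow> real D powr p * (I - S D)"
    by (intro tendsto_mult tendsto_diff tendsto_const Slim)
  then have tailI: "real D powr p * (I - S D) \<le> L\<^sup>2"
    using tail by (intro LIMSEQ_le_const2) auto
  have "((L / \<epsilon>) powr (d / \<beta>)) powr p \<le> real D powr p"
    using assms(7) ppos by (intro powr_mono2) (auto simp: d_def)
  moreover have "((L / \<epsilon>) powr (d / \<beta>)) powr p = (L / \<epsilon>)\<^sup>2"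
  proof -
    have "d / \<beta> * p = 2" using assms(3) dpos by (simp add: p_def)
    then have "((L / \<epsilon>) powr (d / \<beta>)) powr p = (L / \<epsilon>) powr (2::real)"
      by (simp add: powr_powr)
    also have "\<dots> = (L / \<epsilon>)\<^sup>2" using assms(4,5) by (simp add: powr_numeral)
    finally show ?thesis .
  qed
  ultimately have "(L / \<epsilon>)\<^sup>2 \<le> real D powr p" by simp
  then have "L\<^sup>2 \<le> \<epsilon>\<^sup>2 * real D powr p"
    using assms(5) by (simp add: power_divide field_simps)
  with tailI have "real D powr p * (I - S D) \<le> real D powr p * \<epsilon>\<^sup>2" by (simp add: mult.commute)
  then have ED: "I - S D \<le> \<epsilon>\<^sup>2" using Dpos by simp
  define h where "h = (\<lambda>x. \<Sum>j=1..D. a j * \<phi> j x)"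
  have hR: "h \<in> RKHS_D \<phi> D" unfolding RKHS_D_def h_def by blast
  have "l2norm G (\<lambda>x. h x - f\<^sub>0 x) = sqrt (\<integral>x. (f\<^sub>0 x - (\<Sum>j=1..D. a j * \<phi> j x))\<^sup>2 \<partial>G)"
    unfolding l2norm_def h_def by (simp only: power2_commute)
  also have "\<dots> = sqrt (I - S D)" by (simp only: E)
  also have "\<dots> \<le> sqrt (\<epsilon>\<^sup>2)" using ED by (rule real_sqrt_le_mono)
  also have "\<dots> = \<epsilon>" using assms(5) by simp
  finally have hclose: "l2norm G (\<lambda>x. h x - f\<^sub>0 x) \<le> \<epsilon>" .
  have "RKHS_D_norm_sq G \<phi> D h = real D * S D"
    unfolding RKHS_D_norm_sq_def S_def h_def
    by (intro arg_cong[where f="\<lambda>t. real D * t"] sum.cong refl) (simp only: inner_partial[OF onb])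
  also have "\<dots> \<le> real D * I" using Enn[of D] by (intro mult_left_mono) auto
  also have "\<dots> = real D * (l2norm G f\<^sub>0)\<^sup>2" using Inn by (simp add: l2norm_def I_def)
  finally have hnorm: "RKHS_D_norm_sq G \<phi> D h \<le> real D * (l2norm G f\<^sub>0)\<^sup>2" .
  have mem: "RKHS_D_norm_sq G \<phi> D h \<in> {RKHS_D_norm_sq G \<phi> D h | h. h \<in> RKHS_D \<phi> D \<and> l2norm G (\<lambda>x. h x - f\<^sub>0 x) \<le> \<epsilon>}"
    using hR hclose by blast
  have bdd: "bdd_below {RKHS_D_norm_sq G \<phi> D h | h. h \<in> RKHS_D \<phi> D \<and> l2norm G (\<lambda>x. h x - f\<^sub>0 x) \<le> \<epsilon>}"
    by (rule bdd_belowI[where m=0]) (auto simp: RKHS_D_norm_sq_def intro!: sum_nonneg mult_nonneg_nonneg)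
  show ?thesis using cInf_lower[OF mem bdd] hnorm by linarith
qed

end
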